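(* Let $l\subset[0,1]$ be a compact set that is super sparse near every $a\in l$. Then the modified Assouad dimension of $l$ is $0$. The converse fails in general (e.g. $\{0\}\cup\{2^{-k}:k\ge1\}$ has modified Assouad dimension $0$ but is not sparse near $0$).
   Context: For a compact set $l\subset\mathbb{R}$ let $W(l)=\{k\in\mathbb{N}: l\cap([2^{-k-1},2^{-k}]\cup[-2^{-k},-2^{-k-1}])\neq\emptyset\}$, and for $a\in l$ let $W(l,a)=W(l-a)$; $l$ is super sparse near $a$ if $W(l,a)$ has upper Banach density $\limsup_{N\to\infty}\sup_{k\in\mathbb{N}}\#(W(l,a)\cap[k+1,k+N])/N=0$, and sparse near $a$ if its upper natural density is $0$. The Assouad dimension $\dim_{\mathrm A}F$ is the infimum of $s\ge0$ such that there is $C>0$ with $N(B(x,R)\cap F,r)\le C(R/r)^s$ for all $0<r<R$ and $x\in F$ ($N(E,r)$ = minimal number of $r$-intervals covering $E$). The modified Assouad dimension is $\inf\{\sup_i\dim_{\mathrm A}F_i: F\subset\bigcup_{i\in\mathbb{N}}F_i\}$. *)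

theory Defs
  imports "HOL-Analysis.Analysis" "HOL-Library.Liminf_Limsup"
begin

definition W :: "real set \<Rightarrow> nat set" where
  "W l = {k. l \<inter> ({(1/2)^(k+1) .. (1/2)^k} \<union> {-((1/2)^k) .. -((1/2)^(k+1))}) \<noteq> {}}"

definition W_at :: "real set \<Rightarrow> real \<Rightarrow> nat set" where
  "W_at l a = W ((\<lambda>x. x - a) ` l)"

text \<open>Upper Banach density is zero.\<close>
definition super_sparse_near :: "real set \<Rightarrow> real \<Rightarrow> bool" where
  "super_sparse_near l a \<longleftrightarrow>
     limsup (\<lambda>N::nat. SUP k::nat. ereal (real (card (W_at l a \<inter> {k+1..k+N})) / real N)) = 0"

text \<open>Upper natural density is zero.\<close>
definition sparse_near :: "real set \<Rightarrow> real \<Rightarrow> bool" where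
  "sparse_near l a \<longleftrightarrow>
     limsup (\<lambda>N::nat. ereal (real (card (W_at l a \<inter> {1..N})) / real N)) = 0"

definition cover_num :: "real set \<Rightarrow> real \<Rightarrow> nat" where
  "cover_num E r = (LEAST n. \<exists>C. finite C \<and> card C = n \<and> E \<subseteq> (\<Union>c\<in>C. {c..c+r}))"

definition assouad_dim :: "real set \<Rightarrow> ereal" where
  "assouad_dim F = Inf {ereal s | s. s \<ge> 0 \<and> (\<exists>C>0. \<forall>x r R. x \<in> F \<longrightarrow> 0 < r \<longrightarrow> r < R \<longrightarrow>
        real (cover_num (ball x R \<inter> F) r) \<le> C * (R / r) powr s)}"

definition modified_assouad_dim :: "real set \<Rightarrow> ereal" where
  "modified_assouad_dim F = Inf {(SUP i. assouad_dim (Fs i)) | Fs :: nat \<Rightarrow> real set. F \<subseteq> (\<Union>i. Fs i)}"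

end

theory Submission
  imports Defs
begin

definition V :: "real set \<Rightarrow> real \<Rightarrow> nat set" where
  "V S w = {k. \<exists>u\<in>S. (1/2)^(k+1) \<le> \<bar>u-w\<bar> \<and> \<bar>u-w\<bar> \<le> (1/2::real)^k}"

lemma finite_scales: assumes "d > 0" shows "finite {k::nat. d \<le> (1/2::real)^k}"
proof -
  obtain K where K: "(1/2::real)^K < d" using real_arch_pow_inv[OF assms, of "1/2"] by auto
  have "{k::nat. d \<le> (1/2::real)^k} \<subseteq> {..<K}"
  proof
    fix k assume "k \<in> {k::nat. d \<le> (1/2::real)^k}"
    hence "d \<le> (1/2::real)^k" by simp
    show "k \<in> {..<K}"
    proof (rule ccontr)
      assume "k \<notin> {..<K}" hence "K \<le> k" by simp
      hence "(1/2::real)^k \<le> (1/2)^K" by (rule power_decreasing) auto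
      with K \<open>d \<le> _\<close> show False by linarith
    qed
  qed
  thus ?thesis using finite_subset by blast
qed

lemma finite_V: assumes "finite S" shows "finite (V S w)"
proof -
  have "V S w \<subseteq> (\<Union>u\<in>S - {w}. {k. \<bar>u-w\<bar> \<le> (1/2::real)^k})"
    unfolding V_def
  proof safe
    fix k u assume "u \<in> S" "(1/2::real)^(k+1) \<le> \<bar>u-w\<bar>" "\<bar>u-w\<bar> \<le> (1/2)^k"
    moreover have "(0::real) < (1/2)^(k+1)" by simp
    ultimately have "0 < \<bar>u-w\<bar>" by linarith
    hence "u \<noteq> w" by auto
    thus "k \<in> (\<Union>u\<in>S - {w}. {k. \<bar>u-w\<bar> \<le> (1/2::real)^k})" using \<open>u \<in> S\<close> \<open>\<bar>u-w\<bar> \<le> _\<close> by blast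
  qed
  moreover have "finite (\<Union>u\<in>S - {w}. {k. \<bar>u-w\<bar> \<le> (1/2::real)^k})"
    using assms by (intro finite_UN_I) (auto intro: finite_scales)
  ultimately show ?thesis using finite_subset by blast
qed

lemma scale_exists: assumes "0 < d" "d \<le> (1::real)"
  shows "\<exists>k::nat. (1/2)^(k+1) \<le> d \<and> d \<le> (1/2)^k"
proof -
  obtain K where K: "(1/2::real)^K < d" using real_arch_pow_inv[OF assms(1), of "1/2"] by auto
  have "(1/2::real)^(Suc K) \<le> (1/2)^K" by (rule power_decreasing) auto
  hence ex: "\<exists>k. (1/2::real)^(Suc k) \<le> d" using K by (intro exI[of _ K]) linarith
  define k where "k = (LEAST k. (1/2::real)^(Suc k) \<le> d)"
  have k1: "(1/2::real)^(Suc k) \<le> d" unfolding k_def by (rule LeastI_ex[OF ex])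
  have k2: "d \<le> (1/2)^k"
  proof (cases k)
    case 0 thus ?thesis using assms by simp
  next
    case (Suc j)
    have "\<not> (1/2::real)^(Suc j) \<le> d"
    proof
      assume "(1/2::real)^(Suc j) \<le> d"
      hence "k \<le> j" unfolding k_def by (rule Least_le)
      with Suc show False by simp
    qed
    thus ?thesis using Suc by simp
  qed
  show ?thesis using k1 k2 by auto
qed

lemma lemmaA:
  "finite S \<Longrightarrow> (\<forall>u\<in>S. \<forall>w\<in>S. \<bar>u-w\<bar> \<le> 1) \<Longrightarrow> (\<forall>w\<in>S. card (V S w) \<le> b) \<Longrightarrow> card S \<le> 5^b"
proof (induction b arbitrary: S)
  case 0
  show ?case
  proof (rule ccontr)
    assume "\<not> card S \<le> 5^0"
    hence "\<not> card S \<le> Suc 0" by simp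
    then obtain u w where uw: "u \<in> S" "w \<in> S" "u \<noteq> w"
      using card_le_Suc0_iff_eq[OF 0(1)] by blast
    have "0 < \<bar>u - w\<bar>" using uw by simp
    then obtain k where "(1/2::real)^(k+1) \<le> \<bar>u-w\<bar> \<and> \<bar>u-w\<bar> \<le> (1/2)^k"
      using scale_exists 0(2) uw by blast
    hence "k \<in> V S w" unfolding V_def using uw by auto
    hence "card (V S w) > 0" using finite_V[OF 0(1)] card_gt_0_iff by blast
    with 0(3) uw show False by auto
  qed
next
  case (Suc b)
  show ?case
  proof (cases "card S \<le> 1")
    case True
    have "(1::nat) \<le> 5^Suc b" by simp
    with True show ?thesis by linarith 
  next
    case False
    hence ne: "S \<noteq> {}" by auto
    define a where "a = Min S"
    define c where "c = Max S"
    have aS: "a \<in> S" and cS: "c \<in> S" unfolding a_def c_def using Suc.prems(1) ne by (rule Min_in, rule Max_in)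
    have bnd: "\<And>x. x \<in> S \<Longrightarrow> a \<le> x \<and> x \<le> c" unfolding a_def c_def using Suc.prems(1) by simp
    define D where "D = c - a"
    have "D > 0"
    proof (rule ccontr)
      assume "\<not> D > 0"
      have "\<And>x. x \<in> S \<Longrightarrow> x = a"
      proof -
        fix x assume "x \<in> S"
        from bnd[OF this] \<open>\<not> D > 0\<close> show "x = a" unfolding D_def by linarith
      qed
      hence "S \<subseteq> {a}" by auto
      hence "card S \<le> card {a}" by (intro card_mono) simp_all
      hence "card S \<le> 1" by simp
      with False show False by simp
    qed
    define Q where "Q i = S \<inter> {a + real i * D / 5 .. a + (real i + 1) * D / 5}" for i :: nat
    have Qmem: "x \<in> Q i \<longleftrightarrow> x \<in> S \<and> a + real i * D / 5 \<le> x \<and> x \<le> a + real i * D / 5 + D/5" for x i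
    proof -
      have e: "(real i + 1) * D / 5 = real i * D / 5 + D/5" by (simp add: algebra_simps)
      show ?thesis unfolding Q_def Int_iff atLeastAtMost_iff e by (simp add: add.assoc)
    qed
    have cover: "S \<subseteq> (\<Union>i\<in>{..<5}. Q i)"
    proof
      fix x assume x: "x \<in> S"
      have ax: "a \<le> x" "x \<le> a + D" using bnd[OF x] by (simp_all add: D_def)
      have "x \<in> Q 0 \<or> x \<in> Q 1 \<or> x \<in> Q 2 \<or> x \<in> Q 3 \<or> x \<in> Q 4"
        unfolding Qmem using x ax by simp linarith
      thus "x \<in> (\<Union>i\<in>{..<5}. Q i)" by (auto simp: lessThan_nat_numeral)
    qed
    have Qbound: "card (Q i) \<le> 5^b" for i
    proof (rule Suc.IH)
      show "finite (Q i)" using Suc.prems(1) by (simp add: Q_def)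
      show "\<forall>u\<in>Q i. \<forall>w\<in>Q i. \<bar>u - w\<bar> \<le> 1" using Suc.prems(2) by (auto simp: Q_def)
      show "\<forall>w\<in>Q i. card (V (Q i) w) \<le> b"
      proof
        fix w assume w: "w \<in> Q i"
        have wS: "w \<in> S" using w by (simp add: Q_def)
        have sub: "V (Q i) w \<subseteq> V S w" unfolding V_def Q_def by auto
        obtain e where eS: "e \<in> S" and ef: "\<bar>e - w\<bar> \<ge> D/2"
        proof (cases "w - a \<ge> D/2")
          case True thus ?thesis by (intro that[OF aS]) arith
        next
          case False thus ?thesis using bnd[OF wS] by (intro that[OF cS]) (insert D_def, arith)
        qed
        have "0 < \<bar>e - w\<bar>" using ef \<open>D>0\<close> by linarith
        then obtain k0 where k0: "(1/2::real)^(k0+1) \<le> \<bar>e-w\<bar> \<and> \<bar>e-w\<bar> \<le> (1/2)^k0"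
          using scale_exists Suc.prems(2) eS wS by blast
        have k0S: "k0 \<in> V S w" unfolding V_def using k0 eS by auto
        have k0Q: "k0 \<notin> V (Q i) w"
        proof
          assume "k0 \<in> V (Q i) w"
          then obtain u where u: "u \<in> Q i" "(1/2::real)^(k0+1) \<le> \<bar>u-w\<bar>" unfolding V_def by auto
          have e: "(real i + 1)*D/5 = real i * D/5 + D/5" by (simp add: algebra_simps)
          have "\<bar>u - w\<bar> \<le> D/5" using u(1) w unfolding Q_def abs_le_iff by (simp add: e)
          moreover have "(1/2::real)^(k0+1) = (1/2)^k0 / 2" by simp
          ultimately show False using u(2) k0 ef \<open>D > 0\<close> by linarith
        qed
        have "V (Q i) w \<subset> V S w" using sub k0S k0Q by auto
        hence "card (V (Q i) w) < card (V S w)" using finite_V[OF Suc.prems(1)] psubset_card_mono by blast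
        thus "card (V (Q i) w) \<le> b" using Suc.prems(3) wS by fastforce
      qed
    qed
    have "card S \<le> card (\<Union>i\<in>{..<5}. Q i)"
      by (rule card_mono[OF _ cover]) (auto simp: Q_def Suc.prems(1))
    also have "\<dots> \<le> (\<Sum>i\<in>{..<5}. card (Q i))" by (rule card_UN_le) simp
    also have "\<dots> \<le> (\<Sum>i\<in>{..<(5::nat)}. 5^b)" by (rule sum_mono) (rule Qbound)
    also have "\<dots> = 5^Suc b" by simp
    finally show ?thesis .
  qed
qed


lemma window_bound:
  assumes H: "\<forall>k M. M \<ge> N0 \<longrightarrow> real (card (Wa \<inter> {k+1..k+M})) \<le> \<delta> * real M" and "\<delta> \<ge> 0"
  shows "real (card (Wa \<inter> {k0..k0+L})) \<le> 1 + \<delta> * real L + real N0"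
proof -
  have eq: "{k0..k0+L} = insert k0 {k0+1..k0+L}" by auto
  have "card (Wa \<inter> {k0..k0+L}) \<le> card (insert k0 (Wa \<inter> {k0+1..k0+L}))"
    unfolding eq by (intro card_mono) auto
  also have "\<dots> \<le> Suc (card (Wa \<inter> {k0+1..k0+L}))" by (rule card_insert_le_m1) auto
  finally have 1: "card (Wa \<inter> {k0..k0+L}) \<le> Suc (card (Wa \<inter> {k0+1..k0+L}))" .
  have 2: "real (card (Wa \<inter> {k0+1..k0+L})) \<le> \<delta> * real L + real N0"
  proof (cases "L \<ge> N0")
    case True thus ?thesis using H assms(2) by (smt (verit) of_nat_0_le_iff)
  next
    case False
    have "card (Wa \<inter> {k0+1..k0+L}) \<le> card {k0+1..k0+L}" by (intro card_mono) auto
    also have "\<dots> = L" by simp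
    finally show ?thesis using False assms(2) by (smt (verit) of_nat_0_le_iff of_nat_le_iff zero_le_mult_iff)
  qed
  show ?thesis using 1 2 by (smt (verit) of_nat_Suc of_nat_le_iff)
qed

lemma powr_swap: assumes "X > 0" shows "(5::real) powr (\<delta> * log 2 X) = X powr (\<delta> * log 2 5)"
  using assms by (simp add: powr_def log_def mult_ac)

lemma sep_bound:
  fixes l :: "real set" and \<delta> :: real and N0 :: nat
  assumes l01: "l \<subseteq> {0..1}" and dpos: "\<delta> > 0"
    and SF: "\<And>w. w \<in> S \<Longrightarrow> w \<in> l \<and> (\<forall>k M. M \<ge> N0 \<longrightarrow> real (card (W_at l w \<inter> {k+1..k+M})) \<le> \<delta> * real M)"
    and fin: "finite S" and sep: "\<forall>u\<in>S. \<forall>w\<in>S. u \<noteq> w \<longrightarrow> r \<le> \<bar>u-w\<bar>"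
    and diam: "\<forall>u\<in>S. \<forall>w\<in>S. \<bar>u-w\<bar> < 2*R" and r: "0 < r" "r < R"
  shows "real (card S) \<le> 5^(1+N0) * (4*R/r) powr (\<delta> * log 2 5)"
proof -
  define A where "A = {k::nat. (1/2)^(k+1) < 2*R \<and> r \<le> (1/2::real)^k}"
  have finA: "finite A" using finite_scales[OF r(1)] unfolding A_def by (rule rev_finite_subset) auto
  have VA: "V S w \<subseteq> W_at l w \<inter> A" if w: "w \<in> S" for w
  proof
    fix k assume "k \<in> V S w"
    then obtain u where u: "u \<in> S" "(1/2)^(k+1) \<le> \<bar>u-w\<bar>" "\<bar>u-w\<bar> \<le> (1/2::real)^k"
      unfolding V_def by auto
    have "(0::real) < (1/2)^(k+1)" by simp
    hence "0 < \<bar>u-w\<bar>" using u by linarith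
    hence "u \<noteq> w" by auto
    hence "r \<le> \<bar>u-w\<bar>" using sep u w by auto
    moreover have "\<bar>u - w\<bar> < 2*R" using diam u w by auto
    ultimately have "k \<in> A" unfolding A_def using u by auto
    moreover have "k \<in> W_at l w"
    proof -
      have ul: "u \<in> l" using SF u by auto
      have "u - w \<in> (\<lambda>x. x - w) ` l" using ul by auto
      moreover have "u - w \<in> {(1/2)^(k+1) .. (1/2)^k} \<union> {-((1/2)^k) .. -((1/2)^(k+1))}"
        using u(2,3) by (cases "u - w \<ge> 0") auto
      ultimately show ?thesis unfolding W_at_def W_def by blast
    qed
    ultimately show "k \<in> W_at l w \<inter> A" by simp
  qed
  have pos: "0 < 4*R/r" using r by simp
  have ge1: "1 \<le> (4*R/r) powr (\<delta> * log 2 5)"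
    using r dpos by (intro ge_one_powr_ge_zero) (auto simp: field_simps)
  have dist1: "\<forall>u\<in>S. \<forall>w\<in>S. \<bar>u-w\<bar> \<le> 1"
  proof (intro ballI)
    fix u w assume "u \<in> S" "w \<in> S"
    hence "u \<in> {0..1}" "w \<in> {0..1}" using SF l01 by blast+
    thus "\<bar>u-w\<bar> \<le> 1" by (simp add: abs_le_iff)
  qed
  show ?thesis
  proof (cases "A = {}")
    case True
    have "\<forall>w\<in>S. card (V S w) \<le> 0"
    proof
      fix w assume "w \<in> S" hence "V S w = {}" using VA True by blast
      thus "card (V S w) \<le> 0" by simp
    qed
    hence "card S \<le> 5^0" using fin dist1 by (intro lemmaA) auto
    hence "real (card S) \<le> 1" by simp
    also have "\<dots> \<le> 5^(1+N0) * (4*R/r) powr (\<delta> * log 2 5)"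
    proof -
      have "(1::real) \<le> 5^(1+N0)" by (rule one_le_power) simp
      thus ?thesis using ge1 mult_mono[of 1 "5^(1+N0)" 1 "(4*R/r) powr (\<delta> * log 2 5)"] by simp
    qed
    finally show ?thesis .
  next
    case False
    define k0 where "k0 = Min A"
    define k1 where "k1 = Max A"
    define L where "L = k1 - k0"
    have k0A: "k0 \<in> A" and k1A: "k1 \<in> A" using finA False by (auto simp: k0_def k1_def)
    have "k0 \<le> k1" using finA k0A by (auto simp: k1_def)
    hence k1eq: "k1 = k0 + L" by (simp add: L_def)
    have Asub: "A \<subseteq> {k0..k0+L}"
    proof
      fix k assume "k \<in> A"
      hence "k0 \<le> k" "k \<le> k1" by (simp_all add: k0_def k1_def finA)
      thus "k \<in> {k0..k0+L}" using k1eq by simp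
    qed
    have a1: "(1/2::real)^(k0+1) < 2*R" and a2: "r \<le> (1/2::real)^k1" using k0A k1A by (auto simp: A_def)
    have "(1/2::real)^k1 = (1/2)^k0 * (1/2)^L" by (simp add: k1eq power_add)
    hence "r * 2^L \<le> (1/2::real)^k0" using a2 by (simp add: power_one_over field_simps)
    also have "\<dots> < 4*R" using a1 by simp
    finally have "2^L < 4*R/r" using r by (simp add: field_simps)
    hence "2 powr (real L) < 4*R/r" by (simp add: powr_realpow)
    hence Llog: "real L < log 2 (4*R/r)" using pos by (subst less_log_iff) auto
    define B where "B = 1 + \<delta> * real L + real N0"
    have VB: "real (card (V S w)) \<le> B" if w: "w \<in> S" for w
    proof -
      have "card (V S w) \<le> card (W_at l w \<inter> {k0..k0+L})"
        using VA[OF w] Asub by (intro card_mono) auto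
      also have "real \<dots> \<le> B" unfolding B_def using SF[OF w] dpos by (intro window_bound) auto
      finally show ?thesis by simp
    qed
    have "card S \<le> 5^(nat \<lfloor>B\<rfloor>)"
    proof (rule lemmaA[OF fin])
      show "\<forall>u\<in>S. \<forall>w\<in>S. \<bar>u - w\<bar> \<le> 1" by (rule dist1)
      show "\<forall>w\<in>S. card (V S w) \<le> nat \<lfloor>B\<rfloor>" using VB by (simp add: le_nat_floor)
    qed
    hence "real (card S) \<le> 5 powr (real (nat \<lfloor>B\<rfloor>))" by (simp add: powr_realpow)
    also have "\<dots> \<le> 5 powr B"
    proof (intro powr_mono)
      have "B \<ge> 0" unfolding B_def using dpos by simp
      thus "real (nat \<lfloor>B\<rfloor>) \<le> B" by linarith
    qed auto
    also have "\<dots> = 5 powr (1 + real N0) * 5 powr (\<delta> * real L)" unfolding B_def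
      by (simp add: powr_add[symmetric] algebra_simps)
    also have "\<dots> \<le> 5 powr (1 + real N0) * 5 powr (\<delta> * log 2 (4*R/r))"
      using Llog dpos by (intro mult_left_mono powr_mono) auto
    also have "\<dots> = 5^(1+N0) * (4*R/r) powr (\<delta> * log 2 5)"
    proof -
      have "5 powr (1 + real N0) = 5 powr (real (1+N0))" by simp
      also have "\<dots> = (5::real)^(1+N0)" by (rule powr_realpow) simp
      finally show ?thesis using pos by (simp add: powr_swap)
    qed
    finally show ?thesis .
  qed
qed


lemma par2: "(j::nat) < j' \<Longrightarrow> (even j \<longleftrightarrow> even j') \<Longrightarrow> j + 2 \<le> j'" by presburger

lemma cover_bound:
  fixes E :: "real set"
  assumes r: "0 < r" "r < R" and EB: "E \<subseteq> ball x R"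
    and sepbd: "\<And>S. finite S \<Longrightarrow> S \<subseteq> E \<Longrightarrow> (\<forall>u\<in>S. \<forall>w\<in>S. u \<noteq> w \<longrightarrow> r \<le> \<bar>u-w\<bar>) \<Longrightarrow> real (card S) \<le> B"
  shows "real (cover_num E r) \<le> 2 * B"
proof -
  define M where "M = nat \<lceil>2*R/r\<rceil>"
  define g where "g j = x - R + real j * r" for j :: nat
  define J where "J = {j. j < M \<and> {g j .. g j + r} \<inter> E \<noteq> {}}"
  have finJ: "finite J" unfolding J_def by simp
  have cov: "E \<subseteq> (\<Union>c\<in>g ` J. {c..c+r})"
  proof
    fix e assume e: "e \<in> E"
    hence "dist x e < R" using EB by auto
    hence ex: "x - R < e" "e < x + R" by (auto simp: dist_real_def abs_less_iff)
    define t where "t = (e - (x - R)) / r"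
    have t0: "t > 0" using ex r unfolding t_def by simp
    define j where "j = nat \<lfloor>t\<rfloor>"
    have jt: "real j \<le> t" "t < real j + 1" using t0 unfolding j_def by linarith+
    have tr: "t * r = e - (x - R)" unfolding t_def using r by simp
    have ge: "g j \<le> e"
    proof -
      have "real j * r \<le> t * r" using jt r by (simp add: mult_right_mono)
      thus ?thesis using tr unfolding g_def by (simp add: algebra_simps)
    qed
    have le: "e \<le> g j + r"
    proof -
      have "t * r \<le> (real j + 1) * r" using jt r by (simp add: mult_right_mono)
      thus ?thesis using tr unfolding g_def by (simp add: algebra_simps)
    qed
    have "t < 2*R/r" using ex r unfolding t_def by (simp add: divide_strict_right_mono)
    hence "real j < real M" using jt unfolding M_def by linarith
    hence "j < M" by simp
    hence "j \<in> J" unfolding J_def using ge le e by auto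
    thus "e \<in> (\<Union>c\<in>g ` J. {c..c+r})" using ge le by auto
  qed
  have "cover_num E r \<le> card (g ` J)" unfolding cover_num_def
    by (rule Least_le, rule exI[of _ "g ` J"]) (use finJ cov in auto)
  also have "\<dots> \<le> card J" by (rule card_image_le[OF finJ])
  finally have c1: "cover_num E r \<le> card J" .
  have par: "real (card P) \<le> B" if P: "P \<subseteq> J" and sp: "\<And>j j'. j \<in> P \<Longrightarrow> j' \<in> P \<Longrightarrow> j < j' \<Longrightarrow> j + 2 \<le> j'" for P
  proof -
    define f where "f j = (SOME e. e \<in> {g j .. g j + r} \<inter> E)" for j
    have fP: "f j \<in> {g j .. g j + r} \<inter> E" if "j \<in> P" for j
    proof -
      have "j \<in> J" using P that by blast
      hence "\<exists>e. e \<in> {g j .. g j + r} \<inter> E" unfolding J_def by blast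
      thus ?thesis unfolding f_def by (rule someI_ex)
    qed
    have sepf: "r \<le> \<bar>f j - f j'\<bar>" if "j \<in> P" "j' \<in> P" "j < j'" for j j'
    proof -
      have "j + 2 \<le> j'" using sp that by blast
      hence "real j + 2 \<le> real j'" by linarith
      hence "(real j + 2) * r \<le> real j' * r" using r by (simp add: mult_right_mono)
      moreover have "f j \<le> g j + r" "g j' \<le> f j'" using fP[OF that(1)] fP[OF that(2)] by auto
      ultimately show ?thesis unfolding g_def by (simp add: algebra_simps)
    qed
    have sepf2: "r \<le> \<bar>f j - f j'\<bar>" if "j \<in> P" "j' \<in> P" "j \<noteq> j'" for j j'
    proof (cases "j < j'")
      case True thus ?thesis using sepf that by blast
    next
      case False hence "j' < j" using that by simp
      thus ?thesis using sepf[of j' j] that by (simp add: abs_minus_commute)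
    qed
    have inj: "inj_on f P"
    proof (rule inj_onI)
      fix j j' assume "j \<in> P" "j' \<in> P" "f j = f j'"
      show "j = j'"
      proof (rule ccontr)
        assume "j \<noteq> j'"
        hence "r \<le> \<bar>f j - f j'\<bar>" using sepf2 \<open>j \<in> P\<close> \<open>j' \<in> P\<close> by blast
        with \<open>f j = f j'\<close> r show False by simp
      qed
    qed
    have finP: "finite P" using P finJ finite_subset by blast
    have "real (card (f ` P)) \<le> B"
    proof (rule sepbd)
      show "finite (f ` P)" using finP by simp
      show "f ` P \<subseteq> E" using fP by blast
      show "\<forall>u\<in>f ` P. \<forall>w\<in>f ` P. u \<noteq> w \<longrightarrow> r \<le> \<bar>u - w\<bar>" using sepf2 by auto
    qed
    thus ?thesis using card_image[OF inj] by simp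
  qed
  have e: "real (card {j\<in>J. even j}) \<le> B"
    by (rule par, blast, metis (mono_tags, lifting) mem_Collect_eq par2)
  have o: "real (card {j\<in>J. odd j}) \<le> B"
    by (rule par, blast, metis (mono_tags, lifting) mem_Collect_eq par2)
  have "J = {j\<in>J. even j} \<union> {j\<in>J. odd j}" by auto
  hence "card J \<le> card {j\<in>J. even j} + card {j\<in>J. odd j}"
    using card_Un_le[of "{j\<in>J. even j}" "{j\<in>J. odd j}"] by simp
  thus ?thesis using c1 e o by linarith
qed


definition Fset :: "real set \<Rightarrow> real \<Rightarrow> nat \<Rightarrow> real set" where
  "Fset l \<delta> N0 = {a\<in>l. \<forall>k M. M \<ge> N0 \<longrightarrow> real (card (W_at l a \<inter> {k+1..k+M})) \<le> \<delta> * real M}"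

lemma assouad_F:
  assumes l01: "l \<subseteq> {0..1}" and dpos: "\<delta> > 0"
  shows "assouad_dim (Fset l \<delta> N0) \<le> ereal (\<delta> * log 2 5)"
proof -
  define s where "s = \<delta> * log 2 5"
  define F where "F = Fset l \<delta> N0"
  have s0: "s \<ge> 0" unfolding s_def using dpos by simp
  define C where "C = 2 * 5^(1+N0) * 4 powr s"
  have Cpos: "C > 0" unfolding C_def by simp
  have main: "real (cover_num (ball x R \<inter> F) r) \<le> C * (R/r) powr s"
    if x: "x \<in> F" and r: "0 < r" "r < R" for x r R
  proof -
    have "real (cover_num (ball x R \<inter> F) r) \<le> 2 * (5^(1+N0) * (4*R/r) powr s)"
    proof (rule cover_bound[OF r])
      show "ball x R \<inter> F \<subseteq> ball x R" by blast
      fix S assume S: "finite S" "S \<subseteq> ball x R \<inter> F" "\<forall>u\<in>S. \<forall>w\<in>S. u \<noteq> w \<longrightarrow> r \<le> \<bar>u-w\<bar>"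
      show "real (card S) \<le> 5^(1+N0) * (4*R/r) powr s" unfolding s_def
      proof (rule sep_bound[OF l01 dpos _ S(1) S(3) _ r])
        fix w assume "w \<in> S" thus "w \<in> l \<and> (\<forall>k M. N0 \<le> M \<longrightarrow> real (card (W_at l w \<inter> {k + 1..k + M})) \<le> \<delta> * real M)"
          using S(2) unfolding F_def Fset_def by blast
      next
        show "\<forall>u\<in>S. \<forall>w\<in>S. \<bar>u - w\<bar> < 2 * R"
        proof (intro ballI)
          fix u w assume "u \<in> S" "w \<in> S"
          hence "dist x u < R" "dist x w < R" using S(2) by auto
          thus "\<bar>u - w\<bar> < 2*R" by (simp add: dist_real_def abs_less_iff)
        qed
      qed
    qed
    also have "\<dots> = C * (R/r) powr s"
    proof -
      have eq: "4*R/r = 4 * (R/r)" by simp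
      have "(4*R/r) powr s = 4 powr s * (R/r) powr s" unfolding eq by (rule powr_mult)
      thus ?thesis unfolding C_def by simp
    qed
    finally show ?thesis .
  qed
  show ?thesis unfolding assouad_dim_def s_def[symmetric] F_def[symmetric]
    by (rule Inf_lower) (use s0 Cpos main in blast)
qed

lemma assouad_nonneg: "assouad_dim X \<ge> 0"
  unfolding assouad_dim_def by (rule Inf_greatest) auto

lemma modified_nonneg: "modified_assouad_dim X \<ge> 0"
  unfolding modified_assouad_dim_def
proof (rule Inf_greatest)
  fix y assume "y \<in> {(SUP i. assouad_dim (Fs i)) | Fs :: nat \<Rightarrow> real set. X \<subseteq> (\<Union>i. Fs i)}"
  then obtain Fs :: "nat \<Rightarrow> real set" where y: "y = (SUP i. assouad_dim (Fs i))" by blast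
  have "0 \<le> assouad_dim (Fs 0)" by (rule assouad_nonneg)
  also have "\<dots> \<le> y" unfolding y by (rule SUP_upper) simp
  finally show "0 \<le> y" .
qed

lemma modified_le:
  fixes Fs :: "nat \<Rightarrow> real set"
  assumes "X \<subseteq> (\<Union>i. Fs i)" "\<And>i. assouad_dim (Fs i) \<le> c"
  shows "modified_assouad_dim X \<le> c"
proof -
  have "modified_assouad_dim X \<le> (SUP i. assouad_dim (Fs i))"
    unfolding modified_assouad_dim_def
    by (rule Inf_lower) (use assms(1) in auto)
  also have "\<dots> \<le> c" by (rule SUP_least) (rule assms(2))
  finally show ?thesis .
qed

lemma sparse_in_F:
  assumes "super_sparse_near l a" "a \<in> l" "\<delta> > 0"
  shows "\<exists>N0. a \<in> Fset l \<delta> N0"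
proof -
  have "limsup (\<lambda>N::nat. SUP k::nat. ereal (real (card (W_at l a \<inter> {k+1..k+N})) / real N)) < ereal \<delta>"
    using assms(1,3) unfolding super_sparse_near_def by simp
  hence "eventually (\<lambda>N. (SUP k::nat. ereal (real (card (W_at l a \<inter> {k+1..k+N})) / real N)) < ereal \<delta>) sequentially"
    by (rule Limsup_lessD)
  then obtain N0 where N0: "\<And>N. N \<ge> N0 \<Longrightarrow> (SUP k::nat. ereal (real (card (W_at l a \<inter> {k+1..k+N})) / real N)) < ereal \<delta>"
    unfolding eventually_sequentially by blast
  have "a \<in> Fset l \<delta> N0" unfolding Fset_def
  proof (safe intro!: assms(2))
    fix k M assume M: "N0 \<le> M"
    have "ereal (real (card (W_at l a \<inter> {k+1..k+M})) / real M) \<le> (SUP k::nat. ereal (real (card (W_at l a \<inter> {k+1..k+M})) / real M))"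
      by (rule SUP_upper) simp
    also have "\<dots> < ereal \<delta>" using N0[OF M] .
    finally have lt: "real (card (W_at l a \<inter> {k+1..k+M})) / real M < \<delta>" by simp
    show "real (card (W_at l a \<inter> {k+1..k+M})) \<le> \<delta> * real M"
    proof (cases "M = 0")
      case True thus ?thesis by simp
    next
      case False thus ?thesis using lt by (simp add: divide_less_eq)
    qed
  qed
  thus ?thesis by blast
qed

lemma part1:
  assumes "l \<subseteq> {0..1}" "\<forall>a\<in>l. super_sparse_near l a"
  shows "modified_assouad_dim l = 0"
proof (rule antisym)
  show "modified_assouad_dim l \<le> 0"
  proof (rule ereal_le_epsilon2)
    fix e :: real assume e: "0 < e"
    define \<delta> where "\<delta> = e / log 2 5"
    have lg: "log 2 5 > (0::real)" by simp
    have dpos: "\<delta> > 0" unfolding \<delta>_def using e lg by simp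
    have "modified_assouad_dim l \<le> ereal (\<delta> * log 2 5)"
    proof (rule modified_le)
      show "l \<subseteq> (\<Union>i. Fset l \<delta> i)"
      proof
        fix a assume "a \<in> l"
        then obtain N0 where "a \<in> Fset l \<delta> N0" using sparse_in_F assms(2) dpos by blast
        thus "a \<in> (\<Union>i. Fset l \<delta> i)" by blast
      qed
      show "assouad_dim (Fset l \<delta> i) \<le> ereal (\<delta> * log 2 5)" for i
        by (rule assouad_F[OF assms(1) dpos])
    qed
    moreover have "\<delta> * log 2 5 = e"
    proof -
      have ne: "log 2 5 \<noteq> (0::real)" using lg by linarith
      show ?thesis unfolding \<delta>_def using ne by simp
    qed
    ultimately show "modified_assouad_dim l \<le> 0 + ereal e" by simp
  qed
  show "0 \<le> modified_assouad_dim l" by (rule modified_nonneg)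
qed


lemma singleton_dim: "assouad_dim {p} \<le> 0"
proof -
  have "\<forall>x r R. x \<in> {p} \<longrightarrow> 0 < r \<longrightarrow> r < R \<longrightarrow>
        real (cover_num (ball x R \<inter> {p}) r) \<le> 1 * (R / r) powr 0"
  (is "?P")
  proof (intro allI impI)
    fix x r R :: real assume r: "0 < r" "r < R"
    have "cover_num (ball x R \<inter> {p}) r \<le> card {p}" unfolding cover_num_def
      by (rule Least_le, rule exI[of _ "{p}"]) (use r in auto)
    moreover have "R / r \<noteq> 0" using r by simp
    ultimately show "real (cover_num (ball x R \<inter> {p}) r) \<le> 1 * (R / r) powr 0" by simp
  qed
  hence ex1: "\<exists>C>0. \<forall>x r R. x \<in> {p} \<longrightarrow> 0 < r \<longrightarrow> r < R \<longrightarrow>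
        real (cover_num (ball x R \<inter> {p}) r) \<le> C * (R / r) powr 0"
    by (intro exI[of _ "1::real"] conjI) simp_all
  have "ereal 0 \<in> {ereal s | s. s \<ge> 0 \<and> (\<exists>C>0. \<forall>x r R. x \<in> {p} \<longrightarrow> 0 < r \<longrightarrow> r < R \<longrightarrow>
        real (cover_num (ball x R \<inter> {p}) r) \<le> C * (R / r) powr s)}"
    unfolding mem_Collect_eq by (intro exI[of _ "0::real"] conjI refl order_refl ex1)
  thus ?thesis unfolding assouad_dim_def zero_ereal_def by (rule Inf_lower)
qed

lemma part2:
  "let E = insert 0 {(1/2::real)^k | k. k \<ge> 1} in
         modified_assouad_dim E = 0 \<and> \<not> sparse_near E 0"
  unfolding Let_def
proof
  define E where "E = insert 0 {(1/2::real)^k | k. k \<ge> 1}"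
  show "modified_assouad_dim (insert 0 {(1/2::real)^k | k. k \<ge> 1}) = 0"
  proof (rule antisym)
    show "modified_assouad_dim (insert 0 {(1/2::real)^k | k. k \<ge> 1}) \<le> 0"
    proof (rule modified_le)
      show "insert 0 {(1/2::real)^k | k. k \<ge> 1} \<subseteq> (\<Union>i. {if i = 0 then 0 else (1/2)^i})"
      proof
        fix y assume "y \<in> insert 0 {(1/2::real)^k | k. k \<ge> 1}"
        then consider "y = 0" | k where "k \<ge> 1" "y = (1/2)^k" by blast
        thus "y \<in> (\<Union>i. {if i = 0 then 0 else (1/2)^i})"
        proof cases
          case 1 thus ?thesis by (intro UN_I[of 0]) auto
        next
          case 2 thus ?thesis by (intro UN_I[of k]) auto
        qed
      qed
      show "assouad_dim {if i = 0 then 0 else (1/2::real)^i} \<le> 0" for i by (rule singleton_dim)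
    qed
    show "0 \<le> modified_assouad_dim (insert 0 {(1/2::real)^k | k. k \<ge> 1})" by (rule modified_nonneg)
  qed
  show "\<not> sparse_near (insert 0 {(1/2::real)^k | k. k \<ge> 1}) 0"
  proof -
    have img: "(\<lambda>x. x - 0) ` E = E" by simp
    have sub: "{1..N} \<subseteq> W E" for N
    proof
      fix k assume k: "k \<in> {1..N}"
      have "(1/2::real)^k \<in> E" using k unfolding E_def by auto
      moreover have "(1/2::real)^k \<in> {(1/2)^(k+1) .. (1/2)^k}" by (simp add: power_decreasing)
      ultimately show "k \<in> W E" unfolding W_def by blast
    qed
    have eq: "ereal (real (card (W_at E 0 \<inter> {1..N})) / real N) = 1" if "N \<ge> 1" for N
    proof -
      have "W_at E 0 \<inter> {1..N} = {1..N}" unfolding W_at_def img using sub by blast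
      thus ?thesis using that by simp
    qed
    have "((\<lambda>N. ereal (real (card (W_at E 0 \<inter> {1..N})) / real N)) \<longlongrightarrow> 1) sequentially"
      by (rule tendsto_eventually, rule eventually_sequentiallyI[of 1]) (rule eq)
    hence "limsup (\<lambda>N. ereal (real (card (W_at E 0 \<inter> {1..N})) / real N)) = 1"
      by (intro lim_imp_Limsup) auto
    thus ?thesis unfolding sparse_near_def E_def by simp
  qed
qed

theorem proposition4p4:
  shows "(\<forall>l::real set. compact l \<and> l \<subseteq> {0..1} \<and> (\<forall>a\<in>l. super_sparse_near l a)
            \<longrightarrow> modified_assouad_dim l = 0)
    \<and> (let E = insert 0 {(1/2::real)^k | k. k \<ge> 1} in
         modified_assouad_dim E = 0 \<and> \<not> sparse_near E 0)"
  using part1 part2 by blast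

end
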